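(* Let $\Phi_1,\Phi_2$ be two convex growth functions with $\Phi_2\in \mathscr{U}$. Let $s>0$ and let $\mu$ be a positive Borel measure on $\mathbb{C}_+$. Then the following assertions are equivalent. (a) There is a constant $C>0$ such that for any finite interval $I\subset\mathbb{R}$, $\mu(Q_I)\le \dfrac{C}{\Phi_2\circ\Phi_1^{-1}\left(\frac{1}{|I|^s}\right)}$. (b) There exists a constant $C>0$ such that $$\sup_{z=x+iy\in \mathbb{C}_+}\int_{\mathbb{C}_+}\Phi_2\left(\Phi_1^{-1}\left(\frac{1}{y^s}\right)\frac{y^{2s}}{|z-\bar{w}|^{2s}}\right)d\mu(w)\le C<\infty.$$ Moreover, the (best) constants in (a) and (b) are equivalent.
   Context: $\mathbb{C}_+=\{x+iy: y>0\}$. A growth function is a continuous nondecreasing function from $[0,\infty)$ onto $[0,\infty)$; $\Phi^{-1}$ is its inverse. $\mathscr{U}^q$ ($q\ge1$) is the set of growth functions $\Phi$ with $\Phi(st)\le Ct^q\Phi(s)$ for $s>0,t\ge1$ and $t\mapsto\Phi(t)/t$ nondecreasing; $\mathscr{U}=\bigcup_{q\ge1}\mathscr{U}^q$. For an interval $I\subset\mathbb{R}$, $Q_I=\{x+iy:x\in I,0<y<|I|\}$. *)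

theory Defs
  imports "HOL-Analysis.Analysis"
begin

definition growth_function :: "(real \<Rightarrow> real) \<Rightarrow> bool" where
  "growth_function \<Phi> \<longleftrightarrow>
     continuous_on {0..} \<Phi> \<and> mono_on {0..} \<Phi> \<and> \<Phi> ` {0..} = {0..}"

definition ginv :: "(real \<Rightarrow> real) \<Rightarrow> real \<Rightarrow> real" where
  "ginv \<Phi> = inv_into {0..} \<Phi>"

definition U_class :: "real \<Rightarrow> (real \<Rightarrow> real) \<Rightarrow> bool" where
  "U_class q \<Phi> \<longleftrightarrow> growth_function \<Phi> \<and>
     (\<exists>C. \<forall>s>0. \<forall>t\<ge>1. \<Phi> (s * t) \<le> C * t powr q * \<Phi> s) \<and>
     mono_on {0<..} (\<lambda>t. \<Phi> t / t)"

definition U_all :: "(real \<Rightarrow> real) \<Rightarrow> bool" where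
  "U_all \<Phi> \<longleftrightarrow> (\<exists>q\<ge>1. U_class q \<Phi>)"

definition upper_half :: "complex set" where
  "upper_half = {z. Im z > 0}"

definition Qbox :: "real \<Rightarrow> real \<Rightarrow> complex set" where
  "Qbox a b = {z. a \<le> Re z \<and> Re z \<le> b \<and> 0 < Im z \<and> Im z < b - a}"

definition cond_a :: "(real \<Rightarrow> real) \<Rightarrow> (real \<Rightarrow> real) \<Rightarrow> real \<Rightarrow> complex measure \<Rightarrow> real \<Rightarrow> bool" where
  "cond_a \<Phi>1 \<Phi>2 s \<mu> C \<longleftrightarrow>
     (\<forall>a b. a < b \<longrightarrow>
        emeasure \<mu> (Qbox a b) \<le> ennreal (C / \<Phi>2 (ginv \<Phi>1 (1 / (b - a) powr s))))"

definition cond_b :: "(real \<Rightarrow> real) \<Rightarrow> (real \<Rightarrow> real) \<Rightarrow> real \<Rightarrow> complex measure \<Rightarrow> real \<Rightarrow> bool" where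
  "cond_b \<Phi>1 \<Phi>2 s \<mu> C \<longleftrightarrow>
     (\<forall>z\<in>upper_half.
        (\<integral>\<^sup>+ w. ennreal (\<Phi>2 (ginv \<Phi>1 (1 / Im z powr s) *
             (Im z powr (2 * s) / cmod (z - cnj w) powr (2 * s)))) \<partial>\<mu>) \<le> ennreal C)"

end

theory Submission
  imports Defs
begin


lemma gf_props:
  assumes "growth_function P"
  shows "P 0 = 0" and "\<And>x. x \<ge> 0 \<Longrightarrow> P x \<ge> 0"
    and "\<And>x y. 0 \<le> x \<Longrightarrow> x \<le> y \<Longrightarrow> P x \<le> P y"
proof -
  have im: "P ` {0..} = {0..}" and mo: "mono_on {0..} P"
    using assms unfolding growth_function_def by auto
  show nn: "\<And>x. x \<ge> 0 \<Longrightarrow> P x \<ge> 0" using im by auto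
  show mm: "\<And>x y. 0 \<le> x \<Longrightarrow> x \<le> y \<Longrightarrow> P x \<le> P y"
    using mo by (auto simp: mono_on_def)
  have "(0::real) \<in> P ` {0..}" using im by auto
  then obtain x0 where "x0 \<ge> 0" "P x0 = 0" by auto
  then show "P 0 = 0" using mm[of 0 x0] nn[of 0] by auto
qed

lemma ginv_props:
  assumes "growth_function P" "v \<ge> 0"
  shows "ginv P v \<ge> 0" "P (ginv P v) = v"
proof -
  have im: "P ` {0..} = {0..}" using assms unfolding growth_function_def by auto
  have "v \<in> P ` {0..}" using im assms by auto
  then show "ginv P v \<ge> 0" "P (ginv P v) = v"
    unfolding ginv_def using inv_into_into[of v P "{0..}"] f_inv_into_f[of v P "{0..}"] by auto
qed

lemma ginv_pos:
  assumes "growth_function P" "v > 0"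
  shows "ginv P v > 0"
  using ginv_props[OF assms(1), of v] gf_props(1)[OF assms(1)] assms(2)
  by (metis less_eq_real_def less_irrefl)

lemma conv_scale:
  assumes "growth_function P" "convex_on {0..} P" "0 \<le> l" "l \<le> 1" "0 \<le> x"
  shows "P (l * x) \<le> l * P x"
proof -
  have "P ((1 - l) *\<^sub>R 0 + l *\<^sub>R x) \<le> (1 - l) * P 0 + l * P x"
    using convex_onD[OF assms(2), of l 0 x] assms by auto
  then show ?thesis using gf_props(1)[OF assms(1)] by simp
qed

lemma ginv_scale:
  assumes "growth_function P" "convex_on {0..} P" "v > 0" "0 < l" "l \<le> 1"
  shows "l * ginv P v \<le> ginv P (l * v)"
proof (rule ccontr)
  assume "\<not> ?thesis"
  hence lt0: "ginv P (l * v) < l * ginv P v" by simp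
  define xx where "xx = ginv P v"
  define yy where "yy = ginv P (l * v)"
  have lt: "yy < l * xx" using lt0 unfolding xx_def yy_def .
  have x0: "xx \<ge> 0" "P xx = v" unfolding xx_def using ginv_props[OF assms(1), of v] assms by auto
  have y0: "yy \<ge> 0" "P yy = l * v" unfolding yy_def using ginv_props[OF assms(1), of "l * v"] assms by auto
  have a: "P (l * xx) \<le> l * v" using conv_scale[OF assms(1,2), of l xx] assms x0 by auto
  have b: "P yy \<le> P (l * xx)" using gf_props(3)[OF assms(1), of yy "l * xx"] y0 lt by simp
  have eq: "P (l * xx) = l * v" using a b y0 by auto
  \<comment> \<open>now yy < l*xx with same positive value: contradiction by convexity\<close>
  have xpos: "l * xx > 0" using y0 lt by linarith
  define t where "t = yy / (l * xx)"
  have t: "0 \<le> t" "t < 1" using y0 lt xpos by (auto simp: t_def field_simps)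
  have nz: "l \<noteq> 0" "xx \<noteq> 0" using xpos by auto
  have "P (t * (l * xx)) \<le> t * P (l * xx)" using conv_scale[OF assms(1,2), of t "l*xx"] t xpos by auto
  moreover have "t * (l * xx) = yy" using nz by (simp add: t_def)
  ultimately have "l * v \<le> t * (l * v)" using eq y0 by simp
  moreover have "l * v > 0" using assms by simp
  ultimately show False using t by (simp add: mult_le_cancel_right1)
qed

lemma U_pos:
  assumes "growth_function P" "U_class q P" "t > 0"
  shows "P t > 0"
proof (rule ccontr)
  assume "\<not> ?thesis"
  hence z: "P t = 0" using gf_props(2)[OF assms(1), of t] assms by auto
  obtain D where D: "\<forall>s>0. \<forall>u\<ge>1. P (s * u) \<le> D * u powr q * P s"
    using assms(2) unfolding U_class_def by auto
  have all0: "P x = 0" if "x \<ge> 0" for x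
  proof (cases "x \<le> t")
    case True thus ?thesis using gf_props(2,3)[OF assms(1)] z that by (metis order.antisym)
  next
    case False
    hence "P (t * (x / t)) \<le> D * (x/t) powr q * P t" using D[rule_format, of t "x/t"] assms(3) by auto
    hence "P x \<le> 0" using z assms(3) by simp
    thus ?thesis using gf_props(2)[OF assms(1)] that by (meson order.antisym)
  qed
  have "(1::real) \<in> P ` {0..}" using assms(1) unfolding growth_function_def by auto
  then show False using all0 by auto
qed

lemma U_bound:
  assumes "growth_function P" "convex_on {0..} P" "U_class q P"
  shows "\<exists>D>0. \<forall>x\<ge>0. \<forall>T>0. P (x * T) \<le> D * (T + T powr q) * P x"
proof -
  obtain D where D: "\<forall>s>0. \<forall>u\<ge>1. P (s * u) \<le> D * u powr q * P s"
    using assms(3) unfolding U_class_def by auto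
  define D' where "D' = max D 1"
  have "P (x * T) \<le> D' * (T + T powr q) * P x" if x: "x \<ge> 0" and T: "T > 0" for x T
  proof (cases "x = 0")
    case True thus ?thesis using gf_props(1)[OF assms(1)] by simp
  next
    case False
    hence xp: "x > 0" using x by simp
    have Px: "P x \<ge> 0" using gf_props(2)[OF assms(1)] x by simp
    have tq: "T powr q \<ge> 0" by simp
    show ?thesis
    proof (cases "T \<le> 1")
      case True
      have "P (x * T) \<le> T * P x" using conv_scale[OF assms(1,2), of T x] True T x by (simp add: mult.commute)
      also have "\<dots> \<le> D' * (T + T powr q) * P x"
      proof -
        have d1: "D' \<ge> 1" unfolding D'_def by simp
        have "T \<le> T + T powr q" using tq by simp
        also have "\<dots> \<le> D' * (T + T powr q)" using d1 T tq
          by (intro mult_right_mono[of 1 D', simplified]) auto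
        finally have "T \<le> D' * (T + T powr q)" .
        thus ?thesis using Px mult_right_mono by blast
      qed
      finally show ?thesis .
    next
      case False
      have "P (x * T) \<le> D * T powr q * P x" using D xp False by auto
      also have "\<dots> \<le> D' * (T + T powr q) * P x"
      proof -
        have d1: "D \<le> D'" "D' \<ge> 0" unfolding D'_def by auto
        have "D * T powr q \<le> D' * T powr q" using d1 tq by (intro mult_right_mono) auto
        also have "\<dots> \<le> D' * (T + T powr q)" using d1 T by (intro mult_left_mono) auto
        finally have "D * T powr q \<le> D' * (T + T powr q)" .
        thus ?thesis using Px mult_right_mono by blast
      qed
      finally show ?thesis .
    qed
  qed
  moreover have "D' > 0" unfolding D'_def by simp
  ultimately show ?thesis by blast
qed



lemma Qbox_sets:
  assumes "sets \<mu> = sets (restrict_space borel upper_half)"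
  shows "Qbox a b \<in> sets \<mu>" "space \<mu> = upper_half"
proof -
  have uh: "upper_half \<in> sets borel" unfolding upper_half_def
    by (simp add: borel_open open_halfspace_Im_gt)
  have "Qbox a b = {z. a \<le> Re z} \<inter> {z. Re z \<le> b} \<inter> {z. 0 < Im z} \<inter> {z. Im z < b - a}"
    unfolding Qbox_def by auto
  also have "\<dots> \<in> sets borel"
    by (intro sets.Int borel_closed borel_open closed_halfspace_Re_ge closed_halfspace_Re_le
        open_halfspace_Im_gt open_halfspace_Im_lt)
  finally have "Qbox a b \<in> sets borel" .
  moreover have "Qbox a b \<subseteq> upper_half" unfolding Qbox_def upper_half_def by auto
  ultimately show "Qbox a b \<in> sets \<mu>" using assms sets_restrict_space_iff[of upper_half borel] uh
    by auto
  show "space \<mu> = upper_half" using sets_eq_imp_space_eq[OF assms] by (simp add: space_restrict_space)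
qed

lemma dir_ba:
  fixes P1 P2 :: "real \<Rightarrow> real"
  assumes gf1: "growth_function P1" and cv1: "convex_on {0..} P1"
    and gf2: "growth_function P2" and cv2: "convex_on {0..} P2" and U: "U_class q P2"
    and s: "s > 0" and D: "D > 0" "\<forall>x\<ge>0. \<forall>T>0. P2 (x * T) \<le> D * (T + T powr q) * P2 x"
    and M: "sets \<mu> = sets (restrict_space borel upper_half)"
    and C: "C > 0" and cb: "cond_b P1 P2 s \<mu> C"
  shows "cond_a P1 P2 s \<mu> (D * (3 powr (2 * s) + 3 powr (2 * s * q)) * C)"
  unfolding cond_a_def
proof (intro allI impI)
  fix a b :: real assume ab: "a < b"
  define h where "h = b - a"
  have h: "h > 0" using ab h_def by simp
  define z where "z = Complex ((a+b)/2) h"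
  have z: "z \<in> upper_half" "Im z = h" "Re z = (a+b)/2" using h by (auto simp: z_def upper_half_def)
  define A where "A = ginv P1 (1 / h powr s)"
  have A: "A > 0" unfolding A_def using ginv_pos[OF gf1] h by simp
  define T where "T = 3 powr (2 * s)"
  have T: "T \<ge> 1" "T > 0" unfolding T_def using s by (auto intro: ge_one_powr_ge_zero)
  define K where "K = D * (T + T powr q)"
  have K: "K > 0" unfolding K_def using D T by (simp add: add_pos_nonneg)
  define c where "c = P2 (A / T)"
  have PA: "P2 A > 0" using U_pos[OF gf2 U A] .
  have "P2 A = P2 ((A/T) * T)" using T by simp
  also have "\<dots> \<le> K * c" unfolding K_def c_def by (rule D(2)[rule_format]) (use A T in auto)
  finally have cK: "P2 A \<le> K * c" .
  have c0: "c \<ge> 0" unfolding c_def using gf_props(2)[OF gf2] A T by simp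
  have cpos: "c > 0"
  proof (rule ccontr)
    assume "\<not> c > 0" hence "c = 0" using c0 by simp
    thus False using cK PA by simp
  qed
  let ?Q = "Qbox a b"
  have Qs: "?Q \<in> sets \<mu>" and sp: "space \<mu> = upper_half" using Qbox_sets[OF M] by auto
  have pt: "ennreal c * indicator ?Q w \<le> ennreal (P2 (A * (Im z powr (2 * s) / cmod (z - cnj w) powr (2 * s))))"
    if w: "w \<in> space \<mu>" for w
  proof (cases "w \<in> ?Q")
    case False thus ?thesis by simp
  next
    case True
    hence wq: "a \<le> Re w" "Re w \<le> b" "0 < Im w" "Im w < h" unfolding Qbox_def h_def by auto
    have re: "Re (z - cnj w) = (a+b)/2 - Re w" and im: "Im (z - cnj w) = h + Im w" using z by auto
    have "cmod (z - cnj w) \<le> \<bar>(a+b)/2 - Re w\<bar> + \<bar>h + Im w\<bar>" using cmod_le[of "z - cnj w"] unfolding re im .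
    also have "\<dots> \<le> 3 * h"
    proof -
      have e1: "\<bar>(a+b)/2 - Re w\<bar> \<le> h / 2" unfolding abs_le_iff using wq h_def by (auto simp: field_simps)
      have e2: "\<bar>h + Im w\<bar> = h + Im w" using wq h by simp
      show ?thesis using e1 e2 wq h by linarith
    qed
    finally have cm: "cmod (z - cnj w) \<le> 3 * h" .
    have ii: "\<bar>h + Im w\<bar> \<le> cmod (z - cnj w)" using abs_Im_le_cmod[of "z - cnj w"] unfolding im .
    have e3: "\<bar>h + Im w\<bar> = h + Im w" using wq h by simp
    have cmp: "cmod (z - cnj w) > 0" using ii e3 wq h by linarith
    have "cmod (z - cnj w) powr (2 * s) \<le> (3*h) powr (2 * s)" using cm cmp s by (intro powr_mono2) auto
    also have "\<dots> = T * h powr (2 * s)" unfolding T_def using h by (simp add: powr_mult)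
    finally have le1: "cmod (z - cnj w) powr (2 * s) \<le> T * h powr (2 * s)" .
    have hp: "h powr (2 * s) > 0" using h by simp
    have "1 / T \<le> h powr (2 * s) / cmod (z - cnj w) powr (2 * s)"
      using le1 hp T cmp by (simp add: field_simps)
    hence "A / T \<le> A * (Im z powr (2 * s) / cmod (z - cnj w) powr (2 * s))"
      using A z by (metis mult_left_mono less_imp_le times_divide_eq_right mult.right_neutral)
    hence "c \<le> P2 (A * (Im z powr (2 * s) / cmod (z - cnj w) powr (2 * s)))"
      unfolding c_def using gf_props(3)[OF gf2] A T by simp
    thus ?thesis using True by (simp add: ennreal_leI)
  qed
  have "ennreal c * emeasure \<mu> ?Q = (\<integral>\<^sup>+ w. ennreal c * indicator ?Q w \<partial>\<mu>)"
    using nn_integral_cmult_indicator[OF Qs] by simp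
  also have "\<dots> \<le> (\<integral>\<^sup>+ w. ennreal (P2 (A * (Im z powr (2 * s) / cmod (z - cnj w) powr (2 * s)))) \<partial>\<mu>)"
    by (intro nn_integral_mono pt)
  also have "\<dots> \<le> ennreal C" using cb z unfolding cond_b_def A_def by auto
  finally have cm: "ennreal c * emeasure \<mu> ?Q \<le> ennreal C" .
  have "emeasure \<mu> ?Q = ennreal (1/c) * (ennreal c * emeasure \<mu> ?Q)"
    using cpos by (simp add: ennreal_mult'[symmetric] mult.assoc[symmetric])
  also have "\<dots> \<le> ennreal (1/c) * ennreal C" using cm by (intro mult_left_mono) auto
  also have "\<dots> = ennreal (C / c)" using cpos C by (simp add: ennreal_mult'[symmetric])
  also have "\<dots> \<le> ennreal ((K * C) / P2 A)"
  proof (rule ennreal_leI)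
    show "C / c \<le> K * C / P2 A" using cK cpos PA C by (simp add: field_simps)
  qed
  finally show "emeasure \<mu> ?Q \<le> ennreal (D * (3 powr (2 * s) + 3 powr (2 * s * q)) * C / P2 (ginv P1 (1 / (b - a) powr s)))"
    unfolding K_def T_def A_def h_def by (simp add: powr_powr)
qed



lemma cover:
  fixes x y :: real and w :: complex
  assumes y: "y > 0" and w: "Im w > 0" and z: "Re z = x" "Im z = y"
  shows "\<exists>k. w \<in> Qbox (x - 2^k * y) (x + 2^k * y) \<and> 2 powr (real k - 1) * y \<le> cmod (z - cnj w)"
proof -
  let ?Q = "\<lambda>k::nat. Qbox (x - 2^k * y) (x + 2^k * y)"
  have Qm: "w \<in> ?Q k \<longleftrightarrow> x - 2^k * y \<le> Re w \<and> Re w \<le> x + 2^k * y \<and> 0 < Im w \<and> Im w < 2 * 2^k * y" for k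
    unfolding Qbox_def by (auto simp: mult_ac)
  obtain n :: nat where n: "(\<bar>Re w - x\<bar> + Im w) / y < 2 ^ n" using real_arch_pow[of 2] by auto
  hence "\<bar>Re w - x\<bar> + Im w < 2^n * y" using y by (simp add: field_simps)
  hence ex: "w \<in> ?Q n" unfolding Qm using w y
    by (auto simp: abs_less_iff)
  define k0 where "k0 = (LEAST k. w \<in> ?Q k)"
  have k0: "w \<in> ?Q k0" unfolding k0_def by (rule LeastI[of _ n]) (rule ex)
  have re: "\<bar>x - Re w\<bar> \<le> cmod (z - cnj w)" using abs_Re_le_cmod[of "z - cnj w"] z by simp
  have im0: "\<bar>y + Im w\<bar> \<le> cmod (z - cnj w)" using abs_Im_le_cmod[of "z - cnj w"] z by simp
  have im: "y + Im w \<le> cmod (z - cnj w)" using im0 w y by simp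
  have "2 powr (real k0 - 1) * y \<le> cmod (z - cnj w)"
  proof (cases k0)
    case 0
    have "2 powr (real k0 - 1) * y = y / 2" using 0 by (simp add: powr_minus_divide)
    thus ?thesis using im y w by linarith
  next
    case (Suc j)
    have "\<not> w \<in> ?Q j" unfolding k0_def using Suc by (metis k0_def lessI not_less_Least)
    hence "\<bar>Re w - x\<bar> > 2^j * y \<or> Im w \<ge> 2 * 2^j * y" unfolding Qm using w by (auto simp: abs_if)
    hence "2^j * y \<le> cmod (z - cnj w)" using re im y w
      by (auto simp: abs_minus_commute)
    moreover have "2 powr (real k0 - 1) = 2^j" using Suc by (simp add: powr_realpow)
    ultimately show ?thesis by simp
  qed
  thus ?thesis using k0 by blast
qed



lemma geo_lt1:
  assumes "a > 0" shows "2 powr (- a) < (1::real)" "2 powr (- a) > (0::real)"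
proof -
  have "2 powr (- a) < 2 powr (0::real)" using assms by (intro powr_less_mono) auto
  thus "2 powr (- a) < (1::real)" by simp
  show "2 powr (- a) > (0::real)" by simp
qed

lemma dir_ab:
  fixes P1 P2 :: "real \<Rightarrow> real"
  assumes gf1: "growth_function P1" and cv1: "convex_on {0..} P1"
    and gf2: "growth_function P2" and cv2: "convex_on {0..} P2" and U: "U_class q P2" and q: "q \<ge> 1"
    and s: "s > 0" and D: "D > 0" "\<forall>x\<ge>0. \<forall>T>0. P2 (x * T) \<le> D * (T + T powr q) * P2 x"
    and M: "sets \<mu> = sets (restrict_space borel upper_half)"
    and C: "C > 0" and ca: "cond_a P1 P2 s \<mu> C"
  shows "cond_b P1 P2 s \<mu> (D * (2 powr (3 * s) / (1 - 2 powr (- s)) + 2 powr (3 * s * q) / (1 - 2 powr (- s * q))) * C)"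
  unfolding cond_b_def
proof
  fix z assume zu: "z \<in> upper_half"
  define x where "x = Re z"
  define y where "y = Im z"
  have y: "y > 0" using zu unfolding y_def upper_half_def by simp
  define A where "A = ginv P1 (1 / y powr s)"
  have A: "A > 0" unfolding A_def using ginv_pos[OF gf1] y by simp
  define r1 where "r1 = (2::real) powr (- s)"
  define r2 where "r2 = (2::real) powr (- s * q)"
  have r1: "0 < r1" "r1 < 1" unfolding r1_def using geo_lt1[of s] s by auto
  have r2: "0 < r2" "r2 < 1" unfolding r2_def using geo_lt1[of "s * q"] s q by auto
  define Q where "Q = (\<lambda>k::nat. Qbox (x - 2^k * y) (x + 2^k * y))"
  define beta where "beta = (\<lambda>k::nat. (2::real) powr (2 * s * (1 - real k)))"
  define lam where "lam = (\<lambda>k::nat. (2::real) powr (- s * (real k + 1)))"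
  define Tk where "Tk = (\<lambda>k::nat. (2::real) powr (s * (3 - real k)))"
  define G where "G = (\<lambda>k::nat. 2 powr (3 * s) * r1^k + 2 powr (3 * s * q) * r2^k)"
  define e where "e = (\<lambda>k::nat. C * D * G k)"
  define cc where "cc = (\<lambda>k::nat. P2 (A * beta k))"
  define rho where "rho = (\<lambda>w. Im z powr (2 * s) / cmod (z - cnj w) powr (2 * s))"
  have Qs: "Q k \<in> sets \<mu>" for k unfolding Q_def using Qbox_sets[OF M] by auto
  have sp: "space \<mu> = upper_half" using Qbox_sets[OF M] by auto
  have cc0: "cc k \<ge> 0" for k unfolding cc_def beta_def using gf_props(2)[OF gf2] A by simp
  have rho_le: "rho w \<le> beta k" if c: "2 powr (real k - 1) * y \<le> cmod (z - cnj w)" for w k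
  proof -
    have p: "2 powr (real k - 1) * y > 0" using y by simp
    have "(2 powr (real k - 1) * y) powr (2 * s) \<le> cmod (z - cnj w) powr (2 * s)"
      using c p s by (intro powr_mono2) auto
    moreover have "(2 powr (real k - 1) * y) powr (2 * s) = 2 powr ((real k - 1) * (2 * s)) * y powr (2 * s)"
      using y by (simp add: powr_mult powr_powr)
    ultimately have le: "2 powr ((real k - 1) * (2 * s)) * y powr (2 * s) \<le> cmod (z - cnj w) powr (2 * s)" by simp
    have yp: "y powr (2 * s) > 0" using y by simp
    have "rho w \<le> y powr (2 * s) / (2 powr ((real k - 1) * (2 * s)) * y powr (2 * s))"
    proof -
      have pp: "0 < 2 powr ((real k - 1) * (2 * s)) * y powr (2 * s)" using yp by simp
      have cp: "0 < cmod (z - cnj w) powr (2 * s)" using pp le by linarith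
      show ?thesis unfolding rho_def y_def[symmetric] using le yp pp cp
        by (intro divide_left_mono) auto
    qed
    also have "\<dots> = 1 / 2 powr ((real k - 1) * (2 * s))" using yp by simp
    also have "\<dots> = beta k" unfolding beta_def
      by (simp add: powr_minus_divide[symmetric] algebra_simps)
    finally show ?thesis .
  qed
  have pt: "ennreal (P2 (ginv P1 (1 / Im z powr s) * rho w)) \<le> (\<Sum>k. ennreal (cc k) * indicator (Q k) w)"
    if w: "w \<in> space \<mu>" for w
  proof -
    have wu: "Im w > 0" using w sp unfolding upper_half_def by auto
    obtain k where k: "w \<in> Q k" "2 powr (real k - 1) * y \<le> cmod (z - cnj w)"
      using cover[OF y wu, of z x] unfolding Q_def x_def y_def by auto
    have rho0: "rho w \<ge> 0" unfolding rho_def by simp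
    have "P2 (A * rho w) \<le> cc k" unfolding cc_def
      using gf_props(3)[OF gf2, of "A * rho w" "A * beta k"] rho_le[OF k(2)] A rho0
      by (simp add: mult_left_mono)
    hence "ennreal (P2 (ginv P1 (1 / Im z powr s) * rho w)) \<le> ennreal (cc k) * indicator (Q k) w"
      using k(1) unfolding A_def y_def by (simp add: ennreal_leI)
    also have "\<dots> = (\<Sum>i\<in>{k}. ennreal (cc i) * indicator (Q i) w)" by (simp only: sum.insert[OF finite.emptyI] empty_iff not_False_eq_True sum.empty add_0_right)
    also have "\<dots> \<le> (\<Sum>i. ennreal (cc i) * indicator (Q i) w)"
      by (rule sum_le_suminf) (auto intro: summableI)
    finally show ?thesis .
  qed
  have tb: "ennreal (cc k) * emeasure \<mu> (Q k) \<le> ennreal (e k)" for k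
  proof -
    have len: "(x + 2^k * y) - (x - 2^k * y) = 2 powr (real k + 1) * y"
      by (simp add: powr_add powr_realpow)
    have arg: "1 / ((x + 2^k * y) - (x - 2^k * y)) powr s = lam k * (1 / y powr s)"
      unfolding len lam_def using y
      by (simp add: powr_mult powr_powr powr_minus_divide mult.commute)
    define sig where "sig = ginv P1 (lam k * (1 / y powr s))"
    have lam: "0 < lam k" "lam k \<le> 1" unfolding lam_def using geo_lt1[of "s * (real k + 1)"] s
      by (auto simp: mult_pos_pos)
    have sig: "lam k * A \<le> sig" unfolding sig_def A_def
      using ginv_scale[OF gf1 cv1, of "1 / y powr s" "lam k"] lam y by simp
    have lA: "lam k * A > 0" using lam A by simp
    have Pl: "P2 (lam k * A) > 0" using U_pos[OF gf2 U lA] .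
    have Psig: "P2 (lam k * A) \<le> P2 sig" using gf_props(3)[OF gf2] sig lA by simp
    have lt: "x - 2^k * y < x + 2^k * y" using y by simp
    have mu: "emeasure \<mu> (Q k) \<le> ennreal (C / P2 sig)"
      using ca lt unfolding cond_a_def Q_def sig_def arg[symmetric] by blast
    have Tk: "Tk k > 0" unfolding Tk_def by simp
    have ab: "A * beta k = (lam k * A) * Tk k" unfolding beta_def lam_def Tk_def
      by (simp add: powr_add[symmetric] algebra_simps)
    have TkG: "Tk k + Tk k powr q = G k" unfolding Tk_def G_def r1_def r2_def
      by (simp add: powr_power powr_powr powr_add[symmetric] algebra_simps)
    have "cc k \<le> D * G k * P2 (lam k * A)"
      unfolding cc_def ab TkG[symmetric] using D(2) lA Tk by auto
    hence ratio: "cc k / P2 (lam k * A) \<le> D * G k" using Pl by (simp add: pos_divide_le_eq)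
    have "cc k * (C / P2 sig) \<le> cc k * (C / P2 (lam k * A))"
      using cc0 C Pl Psig by (intro mult_left_mono divide_left_mono) auto
    also have "\<dots> = (cc k / P2 (lam k * A)) * C" by simp
    also have "\<dots> \<le> D * G k * C" using ratio C by (intro mult_right_mono) auto
    finally have re: "cc k * (C / P2 sig) \<le> e k" unfolding e_def by (simp add: algebra_simps)
    have "ennreal (cc k) * emeasure \<mu> (Q k) \<le> ennreal (cc k) * ennreal (C / P2 sig)"
      using mu by (intro mult_left_mono) auto
    also have "\<dots> = ennreal (cc k * (C / P2 sig))" by (rule ennreal_mult'[symmetric]) (rule cc0)
    also have "\<dots> \<le> ennreal (e k)" using re by (rule ennreal_leI)
    finally show ?thesis .
  qed
  have esums: "e sums (C * D * (2 powr (3 * s) * (1 / (1 - r1)) + 2 powr (3 * s * q) * (1 / (1 - r2))))"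
    unfolding e_def G_def
    by (intro sums_mult sums_add geometric_sums) (use r1 r2 in auto)
  have e0: "e k \<ge> 0" for k unfolding e_def G_def using C D r1 r2 by simp
  have "(\<integral>\<^sup>+ w. ennreal (P2 (ginv P1 (1 / Im z powr s) * (Im z powr (2 * s) / cmod (z - cnj w) powr (2 * s)))) \<partial>\<mu>)
      \<le> (\<integral>\<^sup>+ w. (\<Sum>k. ennreal (cc k) * indicator (Q k) w) \<partial>\<mu>)"
    using pt unfolding rho_def by (intro nn_integral_mono) auto
  also have "\<dots> = (\<Sum>k. \<integral>\<^sup>+ w. ennreal (cc k) * indicator (Q k) w \<partial>\<mu>)"
    by (rule nn_integral_suminf) (intro borel_measurable_times_ennreal borel_measurable_const borel_measurable_indicator Qs)
  also have "\<dots> = (\<Sum>k. ennreal (cc k) * emeasure \<mu> (Q k))"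
    using nn_integral_cmult_indicator[OF Qs] by simp
  also have "\<dots> \<le> (\<Sum>k. ennreal (e k))"
    by (intro suminf_le tb) (auto intro: summableI)
  also have "\<dots> = ennreal (\<Sum>k. e k)" using e0 sums_summable[OF esums] by (rule suminf_ennreal2)
  also have "\<dots> = ennreal (D * (2 powr (3 * s) / (1 - 2 powr (- s)) + 2 powr (3 * s * q) / (1 - 2 powr (- s * q))) * C)"
    using sums_unique[OF esums] unfolding r1_def r2_def by (simp add: algebra_simps)
  finally show "(\<integral>\<^sup>+ w. ennreal (P2 (ginv P1 (1 / Im z powr s) * (Im z powr (2 * s) / cmod (z - cnj w) powr (2 * s)))) \<partial>\<mu>)
      \<le> ennreal (D * (2 powr (3 * s) / (1 - 2 powr (- s)) + 2 powr (3 * s * q) / (1 - 2 powr (- s * q))) * C)" .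
qed



lemma cond_b_mono: "cond_b P1 P2 s \<mu> C \<Longrightarrow> C \<le> C' \<Longrightarrow> cond_b P1 P2 s \<mu> C'"
  unfolding cond_b_def by (meson ennreal_leI order_trans)

lemma cond_a_mono:
  assumes "growth_function P1" "growth_function P2" "cond_a P1 P2 s \<mu> C" "C \<le> C'"
  shows "cond_a P1 P2 s \<mu> C'"
  unfolding cond_a_def
proof (intro allI impI)
  fix a b :: real assume ab: "a < b"
  define p where "p = P2 (ginv P1 (1 / (b - a) powr s))"
  have "ginv P1 (1 / (b - a) powr s) \<ge> 0" using ginv_props(1)[OF assms(1)] by simp
  hence p: "p \<ge> 0" unfolding p_def using gf_props(2)[OF assms(2)] by simp
  have "emeasure \<mu> (Qbox a b) \<le> ennreal (C / p)" using assms(3) ab unfolding cond_a_def p_def by blast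
  also have "\<dots> \<le> ennreal (C' / p)" using p assms(4) by (intro ennreal_leI divide_right_mono)
  finally show "emeasure \<mu> (Qbox a b) \<le> ennreal (C' / P2 (ginv P1 (1 / (b - a) powr s)))"
    unfolding p_def .
qed

theorem theorem4p1:
  fixes \<Phi>1 \<Phi>2 :: "real \<Rightarrow> real" and s :: real
  assumes "growth_function \<Phi>1" "convex_on {0..} \<Phi>1"
    and "growth_function \<Phi>2" "convex_on {0..} \<Phi>2"
    and "U_all \<Phi>2"
    and "s > 0"
  shows "\<exists>K>0. \<forall>\<mu>::complex measure.
           sets \<mu> = sets (restrict_space borel upper_half) \<longrightarrow>
           ((\<exists>C>0. cond_a \<Phi>1 \<Phi>2 s \<mu> C) \<longleftrightarrow> (\<exists>C>0. cond_b \<Phi>1 \<Phi>2 s \<mu> C)) \<and>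
           (\<forall>C>0. cond_a \<Phi>1 \<Phi>2 s \<mu> C \<longrightarrow> cond_b \<Phi>1 \<Phi>2 s \<mu> (K * C)) \<and>
           (\<forall>C>0. cond_b \<Phi>1 \<Phi>2 s \<mu> C \<longrightarrow> cond_a \<Phi>1 \<Phi>2 s \<mu> (K * C))"
proof -
  note gf1 = assms(1) and cv1 = assms(2) and gf2 = assms(3) and cv2 = assms(4) and s = assms(6)
  obtain q where q: "q \<ge> 1" "U_class q \<Phi>2" using assms(5) unfolding U_all_def by auto
  obtain D where D: "D > 0" "\<forall>x\<ge>0. \<forall>T>0. \<Phi>2 (x * T) \<le> D * (T + T powr q) * \<Phi>2 x"
    using U_bound[OF gf2 cv2 q(2)] by auto
  define K1 where "K1 = D * (2 powr (3 * s) / (1 - 2 powr (- s)) + 2 powr (3 * s * q) / (1 - 2 powr (- s * q)))"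
  define K2 where "K2 = D * (3 powr (2 * s) + 3 powr (2 * s * q))"
  define K where "K = max K1 K2"
  have r1: "2 powr (- s) < (1::real)" using geo_lt1[of s] s by auto
  have r2: "2 powr (- s * q) < (1::real)" using geo_lt1[of "s * q"] s q by auto
  have K1: "K1 > 0" unfolding K1_def using D r1 r2 by (intro mult_pos_pos add_pos_pos divide_pos_pos) auto
  have K2: "K2 > 0" unfolding K2_def using D(1) by (intro mult_pos_pos add_pos_pos) auto
  have K: "K > 0" "K1 \<le> K" "K2 \<le> K" unfolding K_def using K1 by auto
  have main: "(\<forall>C>0. cond_a \<Phi>1 \<Phi>2 s \<mu> C \<longrightarrow> cond_b \<Phi>1 \<Phi>2 s \<mu> (K * C)) \<and>
           (\<forall>C>0. cond_b \<Phi>1 \<Phi>2 s \<mu> C \<longrightarrow> cond_a \<Phi>1 \<Phi>2 s \<mu> (K * C))"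
    if M: "sets \<mu> = sets (restrict_space borel upper_half)" for \<mu> :: "complex measure"
  proof (intro conjI allI impI)
    fix C :: real assume C: "C > 0" and ca: "cond_a \<Phi>1 \<Phi>2 s \<mu> C"
    have "cond_b \<Phi>1 \<Phi>2 s \<mu> (K1 * C)" unfolding K1_def
      by (rule dir_ab[OF gf1 cv1 gf2 cv2 q(2) q(1) s D M C ca])
    moreover have "K1 * C \<le> K * C" by (rule mult_right_mono) (use K C in auto)
    ultimately show "cond_b \<Phi>1 \<Phi>2 s \<mu> (K * C)" by (rule cond_b_mono)
  next
    fix C :: real assume C: "C > 0" and cb: "cond_b \<Phi>1 \<Phi>2 s \<mu> C"
    have "cond_a \<Phi>1 \<Phi>2 s \<mu> (K2 * C)" unfolding K2_def
      by (rule dir_ba[OF gf1 cv1 gf2 cv2 q(2) s D M C cb])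
    moreover have "K2 * C \<le> K * C" by (rule mult_right_mono) (use K C in auto)
    ultimately show "cond_a \<Phi>1 \<Phi>2 s \<mu> (K * C)" by (rule cond_a_mono[OF gf1 gf2])
  qed
  show ?thesis
  proof (intro exI[of _ K] conjI allI impI)
    show "K > 0" by (rule K(1))
  next
    fix \<mu> :: "complex measure" assume M: "sets \<mu> = sets (restrict_space borel upper_half)"
    note m = main[OF M]
    show "(\<exists>C>0. cond_a \<Phi>1 \<Phi>2 s \<mu> C) \<longleftrightarrow> (\<exists>C>0. cond_b \<Phi>1 \<Phi>2 s \<mu> C)"
    proof
      assume "\<exists>C>0. cond_a \<Phi>1 \<Phi>2 s \<mu> C"
      then obtain C where "C > 0" "cond_a \<Phi>1 \<Phi>2 s \<mu> C" by blast
      thus "\<exists>C>0. cond_b \<Phi>1 \<Phi>2 s \<mu> C" using m K(1) by (intro exI[of _ "K * C"]) auto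
    next
      assume "\<exists>C>0. cond_b \<Phi>1 \<Phi>2 s \<mu> C"
      then obtain C where "C > 0" "cond_b \<Phi>1 \<Phi>2 s \<mu> C" by blast
      thus "\<exists>C>0. cond_a \<Phi>1 \<Phi>2 s \<mu> C" using m K(1) by (intro exI[of _ "K * C"]) auto
    qed
    show "cond_b \<Phi>1 \<Phi>2 s \<mu> (K * C)" if "C > 0" "cond_a \<Phi>1 \<Phi>2 s \<mu> C" for C
      using m that by blast
    show "cond_a \<Phi>1 \<Phi>2 s \<mu> (K * C)" if "C > 0" "cond_b \<Phi>1 \<Phi>2 s \<mu> C" for C
      using m that by blast
  qed
qed


end
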